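(* Let $P$ be a path from $u$ to $v$ and $x\in P\setminus\{u,v\}$. Then the length of the $\epsilon_2$-segment containing $x$ satisfies $|\mathrm{seg}(x,P)|\le\epsilon_2\cdot\min\{|P[u,x]|,|P[x,v]|\}$.
   Context: Let $G$ be an undirected graph with real edge weights in $[1,W]$, and let $\epsilon_2>0$. For a path $P$ and vertices $a,b$ on it, $P[a,b]$ is the subpath between them and $|Q|$ denotes the (weighted) length of a path $Q$. For a path $P=(u=v_0,v_1,\dots,v_\ell=v)$ and $1\le i,j<\ell$, the vertices $v_i,v_j$ are in the same $\epsilon_2$-segment if either (1) $|P[u,v_i]|,|P[u,v_j]|\le|P|/2$ and $\lfloor\log_{1+\epsilon_2}|P[u,v_i]|\rfloor=\lfloor\log_{1+\epsilon_2}|P[u,v_j]|\rfloor$, or (2) $|P[v_i,v]|,|P[v_j,v]|<|P|/2$ and $\lfloor\log_{1+\epsilon_2}|P[v_i,v]|\rfloor=\lfloor\log_{1+\epsilon_2}|P[v_j,v]|\rfloor$. This is an equivalence relation whose classes are contiguous subpaths; $u$ and $v$ belong to no segment. For $x\in P\setminus\{u,v\}$, $\mathrm{seg}(x,P)=P[v_l,v_r]$ where $v_l,v_r$ are the vertices of $x$'s class closest to $u$ and to $v$ respectively. *)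

theory Defs
  imports Complex_Main
begin

text \<open>Undirected weighted graph: vertex set V, edge set E (two-element vertex sets),
  weight function w on edges. Vertices of the path are referred to by their index.\<close>

definition is_path :: "'a set \<Rightarrow> 'a set set \<Rightarrow> 'a list \<Rightarrow> bool" where
  "is_path V E ps \<longleftrightarrow> ps \<noteq> [] \<and> distinct ps \<and> set ps \<subseteq> V \<and>
     (\<forall>i. Suc i < length ps \<longrightarrow> {ps ! i, ps ! Suc i} \<in> E)"

definition pref_len :: "('a set \<Rightarrow> real) \<Rightarrow> 'a list \<Rightarrow> nat \<Rightarrow> real" where
  "pref_len w ps i = (\<Sum>k<i. w {ps ! k, ps ! Suc k})"

definition path_len :: "('a set \<Rightarrow> real) \<Rightarrow> 'a list \<Rightarrow> real" where
  "path_len w ps = pref_len w ps (length ps - 1)"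

definition suf_len :: "('a set \<Rightarrow> real) \<Rightarrow> 'a list \<Rightarrow> nat \<Rightarrow> real" where
  "suf_len w ps i = path_len w ps - pref_len w ps i"

definition same_segment :: "real \<Rightarrow> ('a set \<Rightarrow> real) \<Rightarrow> 'a list \<Rightarrow> nat \<Rightarrow> nat \<Rightarrow> bool" where
  "same_segment eps w ps i j \<longleftrightarrow>
     1 \<le> i \<and> i < length ps - 1 \<and> 1 \<le> j \<and> j < length ps - 1 \<and>
     ((pref_len w ps i \<le> path_len w ps / 2 \<and> pref_len w ps j \<le> path_len w ps / 2 \<and>
       \<lfloor>log (1 + eps) (pref_len w ps i)\<rfloor> = \<lfloor>log (1 + eps) (pref_len w ps j)\<rfloor>) \<or>
      (suf_len w ps i < path_len w ps / 2 \<and> suf_len w ps j < path_len w ps / 2 \<and>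
       \<lfloor>log (1 + eps) (suf_len w ps i)\<rfloor> = \<lfloor>log (1 + eps) (suf_len w ps j)\<rfloor>))"

text \<open>seg(v_i, P) = P[v_l, v_r], where v_l (v_r) is the vertex of the class of v_i closest
  to u (to v); we return its weighted length.\<close>
definition seg_left :: "real \<Rightarrow> ('a set \<Rightarrow> real) \<Rightarrow> 'a list \<Rightarrow> nat \<Rightarrow> nat" where
  "seg_left eps w ps i = (LEAST j. same_segment eps w ps i j)"

definition seg_right :: "real \<Rightarrow> ('a set \<Rightarrow> real) \<Rightarrow> 'a list \<Rightarrow> nat \<Rightarrow> nat" where
  "seg_right eps w ps i = (GREATEST j. same_segment eps w ps i j)"

definition seg_len :: "real \<Rightarrow> ('a set \<Rightarrow> real) \<Rightarrow> 'a list \<Rightarrow> nat \<Rightarrow> real" where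
  "seg_len eps w ps i = pref_len w ps (seg_right eps w ps i) - pref_len w ps (seg_left eps w ps i)"

end

theory Submission
  imports Defs
begin

lemma floor_log_diff:
  fixes b a c y :: real
  assumes b: "b > 1" and pos: "a > 0" "c > 0" "y > 0"
    and fa: "\<lfloor>log b a\<rfloor> = \<lfloor>log b y\<rfloor>" and fc: "\<lfloor>log b c\<rfloor> = \<lfloor>log b y\<rfloor>"
  shows "a - c \<le> (b - 1) * y"
proof -
  define k where "k = \<lfloor>log b y\<rfloor>"
  have "log b a < k + 1" using fa k_def by linarith
  hence "b powr log b a < b powr (k + 1)" using b by (intro powr_less_mono) auto
  hence a1: "a < b powr (k + 1)" using b pos by simp
  have "k \<le> log b c" using fc k_def by linarith
  hence "b powr k \<le> b powr log b c" using b by (intro powr_mono) auto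
  hence c1: "b powr k \<le> c" using b pos by simp
  have "k \<le> log b y" using k_def by linarith
  hence "b powr k \<le> b powr log b y" using b by (intro powr_mono) auto
  hence y1: "b powr k \<le> y" using b pos by simp
  have e: "b powr (k + 1) = b * b powr k" using b by (simp add: powr_add)
  have "a - c < b * b powr k - b powr k" using a1 c1 e by linarith
  also have "\<dots> = (b - 1) * b powr k" by (simp add: algebra_simps)
  also have "\<dots> \<le> (b - 1) * y" using y1 b by (intro mult_left_mono) auto
  finally show ?thesis by linarith
qed

lemma edge_w:
  assumes weights: "\<forall>e\<in>E. 1 \<le> w e \<and> w e \<le> W" and path: "is_path V E ps"
    and "Suc k < length ps"
  shows "1 \<le> w {ps ! k, ps ! Suc k}"
proof -
  have "{ps ! k, ps ! Suc k} \<in> E" using path assms(3) unfolding is_path_def by blast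
  thus ?thesis using weights by blast
qed

lemma pref_split:
  assumes "j \<le> L"
  shows "pref_len w ps L = pref_len w ps j + (\<Sum>k\<in>{j..<L}. w {ps ! k, ps ! Suc k})"
proof -
  have "{..<L} = {0..<j} \<union> {j..<L}" using assms by auto
  hence "(\<Sum>k<L. w {ps ! k, ps ! Suc k}) = (\<Sum>k\<in>{0..<j}. w {ps ! k, ps ! Suc k}) + (\<Sum>k\<in>{j..<L}. w {ps ! k, ps ! Suc k})"
    by (simp add: sum.union_disjoint ivl_disj_int_one(2))
  thus ?thesis unfolding pref_len_def by (simp add: atLeast0LessThan)
qed

lemma pref_ge1:
  assumes weights: "\<forall>e\<in>E. 1 \<le> w e \<and> w e \<le> W" and path: "is_path V E ps"
    and "1 \<le> j" "j \<le> length ps - 1"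
  shows "1 \<le> pref_len w ps j"
proof -
  have "pref_len w ps j = pref_len w ps 0 + (\<Sum>k\<in>{0..<j}. w {ps ! k, ps ! Suc k})"
    by (rule pref_split) simp
  also have "\<dots> = (\<Sum>k\<in>{0..<j}. w {ps ! k, ps ! Suc k})" by (simp add: pref_len_def)
  finally have "pref_len w ps j = (\<Sum>k\<in>{0..<j}. w {ps ! k, ps ! Suc k})" .
  moreover have "(\<Sum>k\<in>{0..<j}. w {ps ! k, ps ! Suc k}) \<ge> (\<Sum>k\<in>{0..<1}. w {ps ! k, ps ! Suc k})"
  proof (rule sum_mono2)
    show "0 \<le> w {ps ! k, ps ! Suc k}" if "k \<in> {0..<j} - {0..<1}" for k
    proof -
      have "Suc k < length ps" using that assms by auto
      thus ?thesis using edge_w[OF weights path, of k] by simp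
    qed
  qed (use assms in auto)
  moreover have "Suc 0 < length ps" using assms by auto
  ultimately show ?thesis using edge_w[OF weights path, of 0] by simp
qed

lemma suf_ge1:
  assumes weights: "\<forall>e\<in>E. 1 \<le> w e \<and> w e \<le> W" and path: "is_path V E ps"
    and "j < length ps - 1"
  shows "1 \<le> suf_len w ps j"
proof -
  have "suf_len w ps j = (\<Sum>k\<in>{j..<length ps - 1}. w {ps ! k, ps ! Suc k})"
    (is "_ = ?R") unfolding suf_len_def path_len_def using pref_split[of j "length ps - 1" w ps] assms by simp
  moreover have "(\<Sum>k\<in>{j..<length ps - 1}. w {ps ! k, ps ! Suc k}) \<ge> (\<Sum>k\<in>{j..<Suc j}. w {ps ! k, ps ! Suc k})"
  proof (rule sum_mono2)
    show "0 \<le> w {ps ! k, ps ! Suc k}" if "k \<in> {j..<length ps - 1} - {j..<Suc j}" for k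
    proof -
      have "Suc k < length ps" using that assms by auto
      thus ?thesis using edge_w[OF weights path, of k] by simp
    qed
  qed (use assms in auto)
  moreover have "Suc j < length ps" using assms by auto
  ultimately show ?thesis using edge_w[OF weights path, of j] by simp
qed

theorem lemma3p2:
  fixes V :: "'a set" and E :: "'a set set" and w :: "'a set \<Rightarrow> real"
    and W eps2 :: real and ps :: "'a list" and i :: nat
  assumes edges: "\<forall>e\<in>E. \<exists>a b. a \<in> V \<and> b \<in> V \<and> a \<noteq> b \<and> e = {a, b}"
    and weights: "\<forall>e\<in>E. 1 \<le> w e \<and> w e \<le> W"
    and eps: "eps2 > 0"
    and path: "is_path V E ps"
    and inner: "0 < i" "i < length ps - 1"
  shows "seg_len eps2 w ps i \<le> eps2 * min (pref_len w ps i) (suf_len w ps i)"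
proof -
  let ?S = "same_segment eps2 w ps i"
  define l where "l = seg_left eps2 w ps i"
  define r where "r = seg_right eps2 w ps i"
  have Si: "?S i" unfolding same_segment_def suf_len_def using inner by auto
  have Sl: "?S l" unfolding l_def seg_left_def by (rule LeastI[of ?S i, OF Si])
  have Sr: "?S r" unfolding r_def seg_right_def
    by (rule GreatestI_nat[of ?S i "length ps", OF Si]) (auto simp: same_segment_def)
  have rng: "1 \<le> l" "l < length ps - 1" "1 \<le> r" "r < length ps - 1"
    using Sl Sr unfolding same_segment_def by auto
  have b: "1 + eps2 > 1" using eps by simp
  have sl: "seg_len eps2 w ps i = pref_len w ps r - pref_len w ps l"
    unfolding seg_len_def l_def r_def by simp
  show ?thesis
  proof (cases "pref_len w ps i \<le> path_len w ps / 2")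
    case True
    hence c1: "\<lfloor>log (1 + eps2) (pref_len w ps r)\<rfloor> = \<lfloor>log (1 + eps2) (pref_len w ps i)\<rfloor>"
          "\<lfloor>log (1 + eps2) (pref_len w ps l)\<rfloor> = \<lfloor>log (1 + eps2) (pref_len w ps i)\<rfloor>"
      using Sl Sr unfolding same_segment_def suf_len_def by auto
    have "pref_len w ps r - pref_len w ps l \<le> (1 + eps2 - 1) * pref_len w ps i"
      apply (rule floor_log_diff[OF b _ _ _ c1])
      using pref_ge1[OF weights path, of r] pref_ge1[OF weights path, of l] pref_ge1[OF weights path, of i] rng inner by linarith+
    moreover have "min (pref_len w ps i) (suf_len w ps i) = pref_len w ps i"
      using True unfolding suf_len_def by simp
    ultimately show ?thesis using sl by simp
  next
    case False
    hence c1: "\<lfloor>log (1 + eps2) (suf_len w ps l)\<rfloor> = \<lfloor>log (1 + eps2) (suf_len w ps i)\<rfloor>"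
          "\<lfloor>log (1 + eps2) (suf_len w ps r)\<rfloor> = \<lfloor>log (1 + eps2) (suf_len w ps i)\<rfloor>"
      using Sl Sr unfolding same_segment_def suf_len_def by auto
    have "suf_len w ps l - suf_len w ps r \<le> (1 + eps2 - 1) * suf_len w ps i"
      apply (rule floor_log_diff[OF b _ _ _ c1])
      using suf_ge1[OF weights path, of r] suf_ge1[OF weights path, of l] suf_ge1[OF weights path, of i] rng inner by linarith+
    moreover have "min (pref_len w ps i) (suf_len w ps i) = suf_len w ps i"
      using False unfolding suf_len_def by simp
    moreover have "suf_len w ps l - suf_len w ps r = pref_len w ps r - pref_len w ps l"
      unfolding suf_len_def by simp
    ultimately show ?thesis using sl by simp
  qed
qed

end
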